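(* Let $m$ be a positive integer, $1\le i\le m$, and let $G(\mathbf{l})$ be a function of $\mathbf{l}=(l_1,\ldots,l_m)\in\mathbb{Z}^m$. Then, with $D_i$ acting on the variables $(k_1,\ldots,k_{m+1})$, \begin{multline*} D_i \sum_{l_{1}=k_{1}}^{k_{2}} \sum_{l_{2}=k_{2}}^{k_{3}} \cdots \sum_{l_{m}=k_{m}}^{k_{m+1}} G(l_{1},\ldots,l_{m}) \\ = - \frac{1}{2} \Bigg( \sum_{l_1=k_{1}}^{k_2} \cdots \sum_{l_{i-2}=k_{i-2}}^{k_{i-1}} \sum_{l_{i-1}=k_i+1}^{k_{i+1}+1} \sum_{l_{i}=k_i}^{k_{i+1}} \sum_{l_{i+1}=k_{i}-1}^{k_{i+2}} \sum_{l_{i+2}=k_{i+2}}^{k_{i+3}} \cdots \sum_{l_{m}=k_{m}}^{k_{m+1}} D_{i-1} G (\mathbf{l}) \\ + \sum_{l_1=k_{1}}^{k_2} \cdots \sum_{l_{i-2}=k_{i-2}}^{k_{i-1}} \sum_{l_{i-1}=k_{i-1}}^{k_{i}} \sum_{l_{i}=k_{i}}^{k_{i+1}} \sum_{l_{i+1}=k_{i}-1}^{k_{i+1}-1} \sum_{l_{i+2}=k_{i+2}}^{k_{i+3}} \cdots \sum_{l_{m}=k_{m}}^{k_{m+1}} D_{i} G (\mathbf{l}) \Bigg), \end{multline*} where by convention $D_0G(\mathbf{l})=0$ and $D_mG(\mathbf{l})=0$.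
   Context: For a function $H(k_1,\ldots,k_N)$ of $N$ integer variables and $1\le j\le N-1$, $D_jH(k_1,\ldots,k_N)=H(k_1,\ldots,k_N)+H(k_1,\ldots,k_{j-1},k_{j+1}+1,k_j-1,k_{j+2},\ldots,k_N)$. Sums use the convention: $\sum_{i=a}^bf(i)=f(a)+\cdots+f(b)$ if $a\le b$, $0$ if $b=a-1$, and $-f(b+1)-\cdots-f(a-1)$ if $b+1\le a-1$. *)

theory Defs
  imports Main
begin

definition gsum :: "int \<Rightarrow> int \<Rightarrow> (int \<Rightarrow> 'a::ab_group_add) \<Rightarrow> 'a" where
  "gsum a b f = (if a \<le> b then (\<Sum>x\<in>{a..b}. f x) else - (\<Sum>x\<in>{b+1..a-1}. f x))"

fun multisum :: "(int \<times> int) list \<Rightarrow> (int list \<Rightarrow> 'a::ab_group_add) \<Rightarrow> 'a" where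
  "multisum [] G = G []"
| "multisum ((a,b) # rs) G = gsum a b (\<lambda>l. multisum rs (\<lambda>ls. G (l # ls)))"

text \<open>The operator D_j on functions of N = length ks integer variables
  (k_1,...,k_N) = ks!0, ..., ks!(N-1) (1-based j):
  D_j H(k) = H(k) + H(..., k_{j+1}+1, k_j-1, ...), for 1 \<le> j \<le> N-1;
  by the paper's convention D_0 H = 0 and D_N H = 0.\<close>
definition Dop :: "nat \<Rightarrow> (int list \<Rightarrow> 'a::ab_group_add) \<Rightarrow> int list \<Rightarrow> 'a" where
  "Dop j H ks = (if 1 \<le> j \<and> j < length ks
     then H ks + H (ks[j - 1 := ks ! j + 1, j := ks ! (j - 1) - 1])
     else 0)"

end

theory Submission
  imports Defs
begin

definition gS :: "(int \<Rightarrow> 'a::ab_group_add) \<Rightarrow> int \<Rightarrow> 'a" where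
  "gS f n = (if 0 \<le> n then (\<Sum>x\<in>{0..<n}. f x) else - (\<Sum>x\<in>{n..<0}. f x))"

lemma gS_step: "gS f (n+1) = gS f n + f n"
proof (cases "0 \<le> n")
  case True
  then have "{0..<n+1} = insert n {0..<n}" by auto
  then show ?thesis using True by (simp add: gS_def add.commute)
next
  case False
  show ?thesis
  proof (cases "n = -1")
    case True
    then have "{n..<0} = {-1}" by auto
    then show ?thesis using True by (simp add: gS_def)
  next
    case F2: False
    then have "{n..<0} = insert n {n+1..<0}" using False by auto
    then show ?thesis using False F2 by (simp add: gS_def)
  qed
qed

lemma sum_gS: "a - 1 \<le> b \<Longrightarrow> (\<Sum>x\<in>{a..b}. f x) = gS f (b+1) - gS f a"
proof (induct b rule: int_ge_induct)
  case base then show ?case by simp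
next
  case (step b)
  then have "{a..b+1} = insert (b+1) {a..b}" by auto
  moreover have "gS f (b+1+1) = gS f (b+1) + f (b+1)" by (rule gS_step)
  ultimately show ?case using step by (simp add: algebra_simps)
qed

lemma gsum_gS: "gsum a b f = gS f (b+1) - gS f a"
  unfolding gsum_def by (auto simp: sum_gS)

lemma gsum_split: "gsum a b f + gsum (b+1) c f = gsum a c f"
  by (simp add: gsum_gS)

lemma gsum_neg: "gsum (c+1) (b-1) f = - gsum b c f"
  by (simp add: gsum_gS)

lemma gsum_add: "gsum a b (\<lambda>x. f x + g x) = gsum a b f + gsum a b g"
  by (simp add: gsum_def sum.distrib)

lemma gsum_zero: "gsum a b (\<lambda>x. 0) = 0"
  by (simp add: gsum_def)

lemma gsum_mult: "gsum a b (\<lambda>x. c * f x) = (c::'b::comm_ring) * gsum a b f"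
  by (simp add: gsum_def sum_distrib_left)

lemma sum_shift_int: "(\<Sum>x\<in>{a+t..b+t}. f x) = (\<Sum>x\<in>{a..b}. f (x + t::int))"
proof -
  have "{a+t..b+t} = (\<lambda>x. x + t) ` {a..b}" by (simp add: add.commute)
  moreover have "sum f ((\<lambda>x. x + t) ` {a..b}) = sum (\<lambda>x. f (x+t)) {a..b}"
    by (subst sum.reindex) (auto simp: inj_on_def)
  ultimately show ?thesis by simp
qed

lemma gsum_shift: "gsum (a+t) (b+t) f = gsum a b (\<lambda>x. f (x + t))"
proof -
  have "(\<Sum>x\<in>{b+t+1..a+t-1}. f x) = (\<Sum>x\<in>{b+1..a-1}. f (x + t))"
    using sum_shift_int[where a="b+1" and t=t and b="a-1" and f=f] by (simp add: algebra_simps)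
  then show ?thesis unfolding gsum_def using sum_shift_int[where a=a and t=t and b=b and f=f] by simp
qed

lemma gsum_swap: "gsum a b (\<lambda>x. gsum c d (\<lambda>y. f x y)) = gsum c d (\<lambda>y. gsum a b (\<lambda>x. f x y))"
  unfolding gsum_def by (simp add: sum_negf sum.swap[of _ "{a..b}"] sum.swap[of _ "{b+1..a-1}"])

lemma ms_add: "multisum rs (\<lambda>l. F l + G l) = multisum rs F + multisum rs G"
  by (induction rs arbitrary: F G) (auto simp: gsum_add)

lemma ms_zero: "multisum rs (\<lambda>l. 0) = 0"
  by (induction rs) (auto simp: gsum_zero)

lemma ms_mult: "multisum rs (\<lambda>l. c * G l) = (c::'b::comm_ring) * multisum rs G"
  by (induction rs arbitrary: G) (auto simp: gsum_mult)

lemma ms_cong: "(\<And>l. length l = length rs \<Longrightarrow> F l = G l) \<Longrightarrow> multisum rs F = multisum rs G"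
proof (induction rs arbitrary: F G)
  case Nil then show ?case by simp
next
  case (Cons r rs)
  obtain a b where r: "r = (a,b)" by fastforce
  show ?case unfolding r multisum.simps
    by (rule arg_cong[where f="gsum a b"], rule ext, rule Cons.IH) (simp add: Cons.prems)
qed

lemma ms_split: "j < length rs \<Longrightarrow>
  multisum (rs[j:=(a,b)]) G + multisum (rs[j:=(b+1,c)]) G = multisum (rs[j:=(a,c)]) G"
proof (induction rs arbitrary: j G)
  case Nil then show ?case by simp
next
  case (Cons r rs)
  obtain p q where r: "r = (p,q)" by fastforce
  show ?case
  proof (cases j)
    case 0 then show ?thesis by (simp add: gsum_split)
  next
    case (Suc j') then show ?thesis using Cons by (simp add: r gsum_add[symmetric])
  qed
qed

lemma ms_neg: "j < length rs \<Longrightarrow>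
  multisum (rs[j:=(c+1,b-1)]) G = - multisum (rs[j:=(b,c)]) G"
proof -
  assume "j < length rs"
  have "multisum (rs[j:=(b,c)]) G + multisum (rs[j:=(c+1,b-1)]) G = multisum (rs[j:=(b,b-1)]) G"
    using ms_split[OF \<open>j < length rs\<close>, where a=b and b=c and c="b-1" and G=G] by simp
  moreover have "multisum (rs[j:=(b,b-1)]) G = 0"
  proof -
    have "multisum (rs[j:=(b,b-1)]) G + multisum (rs[j:=(b,b-1)]) G = multisum (rs[j:=(b,b-1)]) G"
      using ms_split[OF \<open>j < length rs\<close>, where a=b and b="b-1" and c="b-1" and G=G] by simp
    then show ?thesis by simp
  qed
  ultimately show ?thesis by (metis add.commute eq_neg_iff_add_eq_0)
qed

lemma ms_swap: "Suc j < length rs \<Longrightarrow> rs!j = (a,b) \<Longrightarrow> rs!Suc j = (c,d) \<Longrightarrow>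
  multisum rs (\<lambda>l. G (l[j := l!Suc j + 1, Suc j := l!j - 1]))
  = multisum (rs[j := (c+1,d+1), Suc j := (a-1,b-1)]) G"
proof (induction rs arbitrary: j G)
  case Nil then show ?case by simp
next
  case (Cons r rs)
  show ?case
  proof (cases j)
    case 0
    then obtain rest where rs: "rs = (c,d) # rest" using Cons.prems by (cases rs) auto
    have r: "r = (a,b)" using Cons.prems 0 by simp
    have "multisum (r#rs) (\<lambda>l. G (l[j := l!Suc j + 1, Suc j := l!j - 1]))
       = gsum a b (\<lambda>x. gsum c d (\<lambda>y. multisum rest (\<lambda>ls. G ((y+1) # (x-1) # ls))))"
      by (simp add: r rs 0)
    also have "\<dots> = gsum c d (\<lambda>y. gsum a b (\<lambda>x. multisum rest (\<lambda>ls. G ((y+1) # (x-1) # ls))))"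
      by (rule gsum_swap)
    also have "\<dots> = gsum (c+1) (d+1) (\<lambda>y. gsum a b (\<lambda>x. multisum rest (\<lambda>ls. G (y # (x-1) # ls))))"
      by (simp add: gsum_shift)
    also have "\<dots> = gsum (c+1) (d+1) (\<lambda>y. gsum (a-1) (b-1) (\<lambda>x. multisum rest (\<lambda>ls. G (y # x # ls))))"
    proof -
      have h: "\<And>f. gsum (a-1) (b-1) f = gsum a b (\<lambda>x. f (x-1))"
        using gsum_shift[where a=a and b=b and t="-1"] by simp
      show ?thesis by (simp only: h)
    qed
    also have "\<dots> = multisum ((r#rs)[j := (c+1,d+1), Suc j := (a-1,b-1)]) G"
      by (simp add: rs 0)
    finally show ?thesis .
  next
    case (Suc j')
    obtain p q where r: "r = (p,q)" by fastforce
    have h: "\<And>l. multisum rs (\<lambda>ls. G (l # ls[j' := ls ! Suc j' + 1, Suc j' := ls ! j' - 1]))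
      = multisum (rs[j' := (c + 1, d + 1), Suc j' := (a - 1, b - 1)]) (\<lambda>ls. G (l # ls))"
      using Cons.prems Cons.IH[of j' "\<lambda>ls. G (l # ls)" for l] by (simp add: Suc)
    show ?thesis using Cons.prems by (simp add: r Suc h)
  qed
qed

lemma Dop_eq: "length l = L \<Longrightarrow> 1 \<le> j \<Longrightarrow> j < L \<Longrightarrow>
  Dop j G l = G l + G (l[j-1 := l!j+1, j := l!(j-1)-1])"
  by (simp add: Dop_def)

lemma Dop_0: "length l \<le> j \<Longrightarrow> Dop j G l = 0"
  by (simp add: Dop_def)

lemma ms_Dop_swap: "Suc j < length rs \<Longrightarrow> rs!j = (a,b) \<Longrightarrow> rs!Suc j = (c,d) \<Longrightarrow>
  multisum rs (Dop (Suc j) G) = multisum rs G + multisum (rs[j := (c+1,d+1), Suc j := (a-1,b-1)]) G"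
proof -
  assume h: "Suc j < length rs" "rs!j = (a,b)" "rs!Suc j = (c,d)"
  have "multisum rs (Dop (Suc j) G) = multisum rs (\<lambda>l. G l + G (l[j := l!Suc j + 1, Suc j := l!j - 1]))"
    by (rule ms_cong) (use h in \<open>simp add: Dop_def\<close>)
  also have "\<dots> = multisum rs G + multisum (rs[j := (c+1,d+1), Suc j := (a-1,b-1)]) G"
    by (simp add: ms_add ms_swap[OF h])
  finally show ?thesis .
qed

lemma ms_Dop0: "j = 0 \<or> length rs \<le> j \<Longrightarrow> multisum rs (Dop j G) = 0"
proof -
  assume h: "j = 0 \<or> length rs \<le> j"
  have "multisum rs (Dop j G) = multisum rs (\<lambda>l. 0)"
    by (rule ms_cong) (use h in \<open>auto simp add: Dop_def\<close>)
  then show ?thesis by (simp add: ms_zero)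
qed

theorem lemma11:
  fixes m i :: nat and G :: "int list \<Rightarrow> 'a::field_char_0" and ks :: "int list"
  assumes "1 \<le> m" and "1 \<le> i" and "i \<le> m" and "length ks = m + 1"
  shows "Dop i (\<lambda>k. multisum (map (\<lambda>p. (k ! (p - 1), k ! p)) [1..<m + 1]) G) ks
    = - (1 / 2) *
      ( multisum (map (\<lambda>p. if p = i - 1 then (ks ! (i - 1) + 1, ks ! i + 1)
                            else if p = i + 1 then (ks ! (i - 1) - 1, ks ! (i + 1))
                            else (ks ! (p - 1), ks ! p)) [1..<m + 1]) (Dop (i - 1) G)
      + multisum (map (\<lambda>p. if p = i + 1 then (ks ! (i - 1) - 1, ks ! i - 1)
                            else (ks ! (p - 1), ks ! p)) [1..<m + 1]) (Dop i G))"
proof -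
  define rs0 where "rs0 = map (\<lambda>p. (ks!(p-1), ks!p)) [1..<m+1]"
  define b where "b = ks!(i-1)"
  define c where "c = ks!i"
  define M where "M = (\<lambda>rs. multisum rs G)"
  define F where "F = (\<lambda>k. multisum (map (\<lambda>p. (k ! (p - 1), k ! p)) [1..<m + 1]) G)"
  define L1 where "L1 = map (\<lambda>p. if p = i - 1 then (ks ! (i - 1) + 1, ks ! i + 1)
                            else if p = i + 1 then (ks ! (i - 1) - 1, ks ! (i + 1))
                            else (ks ! (p - 1), ks ! p)) [1..<m + 1]"
  define L2 where "L2 = map (\<lambda>p. if p = i + 1 then (ks ! (i - 1) - 1, ks ! i - 1)
                            else (ks ! (p - 1), ks ! p)) [1..<m + 1]"
  define ks' where "ks' = ks[i-1 := c+1, i := b-1]"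
  define K where "K = map (\<lambda>p. (ks' ! (p - 1), ks' ! p)) [1..<m + 1]"
  have len0: "length rs0 = m" by (simp add: rs0_def)
  have nth0: "\<And>q. q < m \<Longrightarrow> rs0!q = (ks!q, ks!Suc q)" by (simp add: rs0_def del: upt_Suc)
  have lenL1: "length L1 = m" and lenL2: "length L2 = m" and lenK: "length K = m"
    by (simp_all add: L1_def L2_def K_def)
  have nthK: "\<And>q. q < m \<Longrightarrow> K!q = (ks'!q, ks'!Suc q)" by (simp add: K_def del: upt_Suc)
  have nthL1: "\<And>q. q < m \<Longrightarrow> L1!q = (if Suc q = i - 1 then (b + 1, c + 1)
                            else if Suc q = i + 1 then (b - 1, ks ! (i + 1))
                            else (ks ! q, ks ! Suc q))" by (simp add: L1_def b_def c_def del: upt_Suc)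
  have nthL2: "\<And>q. q < m \<Longrightarrow> L2!q = (if Suc q = i + 1 then (b - 1, c - 1)
                            else (ks ! q, ks ! Suc q))" by (simp add: L2_def b_def c_def del: upt_Suc)
  have "Dop i F ks = F ks + F ks'"
    using assms by (simp add: Dop_def ks'_def b_def c_def)
  then have LHS: "Dop i F ks = M rs0 + M K"
    by (simp add: F_def M_def rs0_def K_def)
  have goal: "M rs0 + M K = - (1/2) * (multisum L1 (Dop (i - 1) G) + multisum L2 (Dop i G))"
  proof (cases "i < m")
    case True
    define d where "d = ks!Suc i"
    have sd: "rs0 ! i = (c, d)" using True by (simp add: nth0 c_def d_def)
    show ?thesis
    proof (cases "i = 1")
      case True
      have i: "i = 1" by fact
      have lt: "0 < m" "1 < m" using \<open>i < m\<close> i by auto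
      have sy: "rs0 ! 0 = (b, c)" using lt by (simp add: nth0 b_def c_def i)
      have K_eq: "K = rs0[1 := (b-1,d), 0 := (c+1, b-1)]"
        by (rule nth_equalityI)
          (auto simp: lenK len0 nthK ks'_def nth_list_update nth0 lt i b_def c_def d_def
            assms(4) del: upt_Suc)
      have L2_eq: "L2 = rs0[1 := (b-1,c-1)]"
        by (rule nth_equalityI)
          (auto simp: lenL2 len0 nthL2 nth_list_update nth0 lt i b_def c_def d_def del: upt_Suc)
      have e1: "rs0[1 := (b-1,d), 0 := (b, c)] = rs0[1 := (b-1,d)]"
        by (rule nth_equalityI) (auto simp: len0 lt nth_list_update sy)
      have e3: "rs0[1 := (c,d)] = rs0"
        using sd i by (metis list_update_id)
      have s1: "M K = - M (rs0[1 := (b-1,d)])"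
        unfolding K_eq M_def using ms_neg[where j="0" and rs="rs0[1 := (b-1,d)]"
          and b=b and c=c and G=G] lt len0 e1 by simp
      have s3: "M L2 + M rs0 = M (rs0[1 := (b-1,d)])"
        unfolding L2_eq M_def using ms_split[where j=1 and rs="rs0" and a="b-1" and b="c-1"
          and c="d" and G=G] lt len0 e3 by simp
      have r1: "multisum L1 (Dop (i - 1) G) = 0"
        using ms_Dop0[of 0 L1 G] i by simp
      have L2x: "L2 ! 0 = (b, c)" "L2 ! Suc 0 = (b-1, c-1)"
        using lt by (simp_all add: L2_eq nth_list_update len0 sy)
      have L2s: "L2[0 := (b-1+1, c-1+1), Suc 0 := (b-1, c-1)] = L2"
        using L2x by (simp, metis list_update_id)
      have r2: "multisum L2 (Dop i G) = 2 * M L2"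
        using ms_Dop_swap[where j="0" and rs=L2 and G=G, OF _ L2x] lt lenL2 L2s
        by (simp add: i M_def)
      show ?thesis using s1 s3 r1 r2 by (simp add: algebra_simps)
    next
      case False
      then obtain j0 where i: "i = Suc (Suc j0)" using assms(2)
        by (metis One_nat_def Suc_le_D le_antisym not_less_eq_eq)
      define a where "a = ks!j0"
      have sx: "rs0 ! j0 = (a, b)" and sy: "rs0 ! Suc j0 = (b,c)"
        using \<open>i < m\<close> by (simp_all add: nth0 a_def b_def c_def i)
      have lt: "j0 < m" "Suc j0 < m" "i < m" "Suc (Suc j0) < m" using \<open>i < m\<close> i by auto
      have K_eq: "K = rs0[j0 := (a, c+1), i := (b-1,d), Suc j0 := (c+1, b-1)]"
        by (rule nth_equalityI)
          (auto simp: lenK len0 nthK ks'_def nth_list_update nth0 lt i a_def b_def c_def d_def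
            assms(4) del: upt_Suc)
      have L1_eq: "L1 = rs0[i := (b-1,d), j0 := (b+1, c+1)]"
        by (rule nth_equalityI)
          (auto simp: lenL1 len0 nthL1 nth_list_update nth0 lt i a_def b_def c_def d_def del: upt_Suc)
      have L2_eq: "L2 = rs0[i := (b-1,c-1)]"
        by (rule nth_equalityI)
          (auto simp: lenL2 len0 nthL2 nth_list_update nth0 lt i a_def b_def c_def d_def del: upt_Suc)
      have e1: "rs0[j0 := (a, c+1), i := (b-1,d), Suc j0 := (b, c)] = rs0[i := (b-1,d), j0 := (a, c+1)]"
        by (rule nth_equalityI) (auto simp: len0 lt nth_list_update sy i)
      have e2: "rs0[i := (b-1,d), j0 := (a, b)] = rs0[i := (b-1,d)]"
        by (rule nth_equalityI) (auto simp: len0 lt nth_list_update sx i)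
      have e3: "rs0[i := (c,d)] = rs0"
        by (rule nth_equalityI) (auto simp: len0 lt nth_list_update sd)
      have s1: "M K = - M (rs0[i := (b-1,d), j0 := (a, c+1)])"
        unfolding K_eq M_def using ms_neg[where j="Suc j0" and rs="rs0[j0 := (a, c+1), i := (b-1,d)]"
          and b=b and c=c and G=G] lt len0 e1 by simp
      have s2: "M (rs0[i := (b-1,d)]) + M L1 = M (rs0[i := (b-1,d), j0 := (a, c+1)])"
        unfolding L1_eq M_def using ms_split[where j=j0 and rs="rs0[i := (b-1,d)]" and a=a and b=b
          and c="c+1" and G=G] lt len0 e2 by simp
      have s3: "M L2 + M rs0 = M (rs0[i := (b-1,d)])"
        unfolding L2_eq M_def using ms_split[where j=i and rs="rs0" and a="b-1" and b="c-1"
          and c="d" and G=G] lt len0 e3 by simp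
      have L1x: "L1 ! j0 = (b+1, c+1)" "L1 ! Suc j0 = (b, c)"
        using lt by (simp_all add: L1_eq nth_list_update len0 sy i)
      have L1s: "L1[j0 := (b+1, c+1), Suc j0 := (b, c)] = L1"
        using L1x by (metis list_update_id)
      have r1: "multisum L1 (Dop (i - 1) G) = 2 * M L1"
        using ms_Dop_swap[where j=j0 and rs=L1 and G=G, OF _ L1x] lt lenL1 L1s
        by (simp add: i M_def)
      have L2x: "L2 ! Suc j0 = (b, c)" "L2 ! i = (b-1, c-1)"
        using lt by (simp_all add: L2_eq nth_list_update len0 sy i)
      have L2s: "L2[Suc j0 := (b-1+1, c-1+1), i := (b-1, c-1)] = L2"
        using L2x by (simp, metis list_update_id)
      have r2: "multisum L2 (Dop i G) = 2 * M L2"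
        using ms_Dop_swap[where j="Suc j0" and rs=L2 and G=G, OF _ L2x[unfolded i]] lt lenL2 L2s
        by (simp add: i M_def)
      show ?thesis using s1 s2 s3 r1 r2 by (simp add: algebra_simps)
    qed
  next
    case False
    then have im: "i = m" using assms by simp
    show ?thesis
    proof (cases "i = 1")
      case True
      have i: "i = 1" by fact
      have lt: "0 < m" "m = 1" using im i by auto
      have sy: "rs0 ! 0 = (b, c)" using lt by (simp add: nth0 b_def c_def i)
      have K_eq: "K = rs0[0 := (c+1, b-1)]"
        by (rule nth_equalityI)
          (auto simp: lenK len0 nthK ks'_def nth_list_update nth0 lt i im b_def c_def
            assms(4) del: upt_Suc)
      have e1: "rs0[0 := (b, c)] = rs0"
        using sy by (metis list_update_id)
      have s1: "M K = - M rs0"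
        unfolding K_eq M_def using ms_neg[where j="0" and rs="rs0"
          and b=b and c=c and G=G] lt len0 e1 by simp
      have r1: "multisum L1 (Dop (i - 1) G) = 0"
        using ms_Dop0[of 0 L1 G] i by simp
      have r2: "multisum L2 (Dop i G) = 0"
        using ms_Dop0[of i L2 G] im lenL2 by simp
      show ?thesis using s1 r1 r2 by (simp add: algebra_simps)
    next
      case False
      then obtain j0 where i: "i = Suc (Suc j0)" using assms(2)
        by (metis One_nat_def Suc_le_D le_antisym not_less_eq_eq)
      define a where "a = ks!j0"
      have lt: "j0 < m" "Suc j0 < m" "m = Suc (Suc j0)" using im i by auto
      have sx: "rs0 ! j0 = (a, b)" and sy: "rs0 ! Suc j0 = (b,c)"
        using lt by (simp_all add: nth0 a_def b_def c_def i)
      have K_eq: "K = rs0[j0 := (a, c+1), Suc j0 := (c+1, b-1)]"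
        by (rule nth_equalityI)
          (auto simp: lenK len0 nthK ks'_def nth_list_update nth0 lt i a_def b_def c_def
            assms(4) del: upt_Suc)
      have L1_eq: "L1 = rs0[j0 := (b+1, c+1)]"
        by (rule nth_equalityI)
          (auto simp: lenL1 len0 nthL1 nth_list_update nth0 lt i a_def b_def c_def del: upt_Suc)
      have e1: "rs0[j0 := (a, c+1), Suc j0 := (b, c)] = rs0[j0 := (a, c+1)]"
        by (rule nth_equalityI) (auto simp: len0 lt nth_list_update sy)
      have e2: "rs0[j0 := (a, b)] = rs0"
        using sx by (metis list_update_id)
      have s1: "M K = - M (rs0[j0 := (a, c+1)])"
        unfolding K_eq M_def using ms_neg[where j="Suc j0" and rs="rs0[j0 := (a, c+1)]"
          and b=b and c=c and G=G] lt len0 e1 by simp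
      have s2: "M rs0 + M L1 = M (rs0[j0 := (a, c+1)])"
        unfolding L1_eq M_def using ms_split[where j=j0 and rs="rs0" and a=a and b=b
          and c="c+1" and G=G] lt len0 e2 by simp
      have L1x: "L1 ! j0 = (b+1, c+1)" "L1 ! Suc j0 = (b, c)"
        using lt by (simp_all add: L1_eq nth_list_update len0 sy)
      have L1s: "L1[j0 := (b+1, c+1), Suc j0 := (b, c)] = L1"
        using L1x by (metis list_update_id)
      have r1: "multisum L1 (Dop (i - 1) G) = 2 * M L1"
        using ms_Dop_swap[where j=j0 and rs=L1 and G=G, OF _ L1x] lt lenL1 L1s
        by (simp add: i M_def)
      have r2: "multisum L2 (Dop i G) = 0"
        using ms_Dop0[of i L2 G] im lenL2 by simp
      show ?thesis using s1 s2 r1 r2 by (simp add: algebra_simps)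
    qed
  qed
  show ?thesis using LHS goal by (simp add: F_def L1_def L2_def)
qed

end
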